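(* Let $\mathscr A=\{H_1,\dots,H_p\}$ be a hyperplane arrangement in $\mathbb R^n$, each $H_s$ defined by a single nonzero linear equation $\sum_i a^s_ix_i=0$ with integer coefficients. For $\mathbf m\in\mathbb Z_{\ge0}^n$ let $P_{\mathbf m}(q)=\chi_{\mathscr A(\mathbf m)}(q)/\prod_{i\in\mathrm{supp}(\mathbf m)}m_i!$ (with $P_{\mathbf 0}=1$), the polynomial agreeing with ${}_{\mathbf m}\Pi_{\mathscr A}(q)$ for large primes $q$. Then $(-1)^{|\mathbf m|}P_{\mathbf m}(-q)\ge0$ for all $\mathbf m\in\mathbb Z_{\ge0}^n$ and all integers $q\ge0$. Equivalently, the power series $\sum_{\mathbf m}(-1)^{|\mathbf m|}P_{\mathbf m}(-q)x^{\mathbf m}$ (which the paper denotes $I(\mathscr A,-x)^{-q}$) has nonnegative coefficients for every integer $q\ge0$.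
   Context: $\mathrm{supp}(H_s)=\{i:a^s_i\ne0\}$, $\mathrm{supp}(\mathbf m)=\{i:m_i\ne0\}$, $|\mathbf m|=\sum_im_i$. $\mathscr A(\mathbf m)$ is the arrangement in $\mathbb R^{|\mathbf m|}$ with coordinates $x_{ir}$ ($i\in\mathrm{supp}(\mathbf m)$, $1\le r\le m_i$) consisting of the hyperplanes $x_{ir}-x_{is}=0$ for $i\in\mathrm{supp}(\mathbf m)$, $1\le r\neq s\le m_i$, together with, for each $s$ with $\mathrm{supp}(H_s)\subseteq\mathrm{supp}(\mathbf m)$ and each tuple $(k_i)_{i\in\mathrm{supp}(\mathbf m)}$ with $1\le k_i\le m_i$, the hyperplane $\sum_{i\in\mathrm{supp}(\mathbf m)}a^s_ix_{ik_i}=0$. ${}_{\mathbf m}\Pi_{\mathscr A}(q)$ is the number of maps $i\mapsto C_i\subseteq\mathbb F_q$ with $|C_i|=m_i$ such that for no $s$ is there a choice $x_i\in C_i$ ($i\in\mathrm{supp}(H_s)$) with $\sum_ia^s_ix_i\equiv0\pmod q$. For an arrangement $\mathscr B$ in $\mathbb R^N$, $\chi_{\mathscr B}(q)=\sum_{X\in L(\mathscr B)}\mu(\mathbb R^N,X)q^{\dim X}$, where $L(\mathscr B)$ is the intersection poset (including $\mathbb R^N$) ordered by reverse inclusion and $\mu$ its Möbius function. *)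

theory Defs
  imports "HOL-Analysis.Analysis" "HOL-Library.Function_Algebras"
begin

definition mobius :: "('a \<Rightarrow> 'a \<Rightarrow> bool) \<Rightarrow> 'a set \<Rightarrow> 'a \<Rightarrow> 'a \<Rightarrow> int" where
  "mobius le P = (THE mu. \<forall>x y. mu x y =
      (if x \<in> P \<and> y \<in> P \<and> le x y then
         (if x = y then 1 else - (\<Sum>z\<in>{z\<in>P. le x z \<and> le z y \<and> z \<noteq> y}. mu x z))
       else 0))"

text \<open>Vectors of the ambient space R^J are functions on the index set J, extended by 0.\<close>
definition ambient :: "'i set \<Rightarrow> ('i \<Rightarrow> real) set" where
  "ambient J = {x. \<forall>j. j \<notin> J \<longrightarrow> x j = 0}"

definition fdim :: "('i \<Rightarrow> real) set \<Rightarrow> nat" where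
  "fdim X = vector_space.dim (\<lambda>c (f::'i \<Rightarrow> real) j. c * f j) X"

definition hyp :: "'i set \<Rightarrow> ('i \<Rightarrow> real) \<Rightarrow> ('i \<Rightarrow> real) set" where
  "hyp J c = {x \<in> ambient J. (\<Sum>j\<in>J. c j * x j) = 0}"

definition intersection_poset :: "('i \<Rightarrow> real) set \<Rightarrow> ('i \<Rightarrow> real) set set \<Rightarrow> ('i \<Rightarrow> real) set set" where
  "intersection_poset V B = {V \<inter> \<Inter>S | S. S \<subseteq> B}"

definition char_poly :: "('i \<Rightarrow> real) set \<Rightarrow> ('i \<Rightarrow> real) set set \<Rightarrow> real \<Rightarrow> real" where
  "char_poly V B t = (\<Sum>X\<in>intersection_poset V B.
      of_int (mobius (\<lambda>X Y. Y \<subseteq> X) (intersection_poset V B) V X) * t ^ fdim X)"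

text \<open>The arrangement A in R^n is given by p integer coefficient vectors: H_s is
  sum_{i<n} a s i * x_i = 0, for s < p.  A multiplicity vector m in Z_{>=0}^n is a function
  nat => nat vanishing from n on.\<close>

definition supp_m :: "nat \<Rightarrow> (nat \<Rightarrow> nat) \<Rightarrow> nat set" where
  "supp_m n m = {i. i < n \<and> m i \<noteq> 0}"

definition supp_H :: "nat \<Rightarrow> (nat \<Rightarrow> nat \<Rightarrow> int) \<Rightarrow> nat \<Rightarrow> nat set" where
  "supp_H n a s = {i. i < n \<and> a s i \<noteq> 0}"

definition abs_m :: "nat \<Rightarrow> (nat \<Rightarrow> nat) \<Rightarrow> nat" where
  "abs_m n m = (\<Sum>i<n. m i)"

definition coords :: "nat \<Rightarrow> (nat \<Rightarrow> nat) \<Rightarrow> (nat \<times> nat) set" where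
  "coords n m = {(i, r). i \<in> supp_m n m \<and> 1 \<le> r \<and> r \<le> m i}"

definition diff_forms :: "nat \<Rightarrow> (nat \<Rightarrow> nat) \<Rightarrow> (nat \<times> nat \<Rightarrow> real) set" where
  "diff_forms n m = {(\<lambda>j. if j = (i, r) then 1 else if j = (i, r') then -1 else 0) | i r r'.
      i \<in> supp_m n m \<and> 1 \<le> r \<and> r \<le> m i \<and> 1 \<le> r' \<and> r' \<le> m i \<and> r \<noteq> r'}"

definition lift_forms :: "nat \<Rightarrow> nat \<Rightarrow> (nat \<Rightarrow> nat \<Rightarrow> int) \<Rightarrow> (nat \<Rightarrow> nat) \<Rightarrow> (nat \<times> nat \<Rightarrow> real) set" where
  "lift_forms n p a m = {(\<lambda>j. if fst j \<in> supp_m n m \<and> snd j = k (fst j) then of_int (a s (fst j)) else 0) | s k.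
      s < p \<and> supp_H n a s \<subseteq> supp_m n m \<and> (\<forall>i\<in>supp_m n m. 1 \<le> k i \<and> k i \<le> m i)}"

definition arr_m :: "nat \<Rightarrow> nat \<Rightarrow> (nat \<Rightarrow> nat \<Rightarrow> int) \<Rightarrow> (nat \<Rightarrow> nat) \<Rightarrow> (nat \<times> nat \<Rightarrow> real) set set" where
  "arr_m n p a m = hyp (coords n m) ` (diff_forms n m \<union> lift_forms n p a m)"

definition P_m :: "nat \<Rightarrow> nat \<Rightarrow> (nat \<Rightarrow> nat \<Rightarrow> int) \<Rightarrow> (nat \<Rightarrow> nat) \<Rightarrow> real \<Rightarrow> real" where
  "P_m n p a m t = char_poly (ambient (coords n m)) (arr_m n p a m) t
      / (\<Prod>i\<in>supp_m n m. fact (m i))"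

end

theory Submission
  imports Defs
begin

interpretation fv: vector_space "\<lambda>c (f::'i \<Rightarrow> real) j. c * f j"
  by unfold_locales (auto simp: fun_eq_iff algebra_simps)

lemma fdim_eq: "fdim X = fv.dim X" unfolding fdim_def ..

lemma sum_fun_apply': "(sum f A) j = (\<Sum>a\<in>A. f a j)"
  by (induction A rule: infinite_finite_induct) auto

definition delta :: "'i \<Rightarrow> 'i \<Rightarrow> real" where "delta i = (\<lambda>j. if j = i then 1 else 0)"

lemma ambient_span:
  assumes "finite J"
  shows "ambient J \<subseteq> fv.span (delta ` J)"
proof
  fix x assume x: "x \<in> ambient J"
  have "x = (\<Sum>j\<in>J. (\<lambda>i. x j * delta j i))"
    using x assms by (auto simp: fun_eq_iff sum_fun_apply' delta_def ambient_def if_distrib cong: if_cong)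
  also have "\<dots> \<in> fv.span (delta ` J)"
    by (intro fv.span_sum fv.span_scale fv.span_base) auto
  finally show "x \<in> fv.span (delta ` J)" .
qed

lemma ambient_subspace: "fv.subspace (ambient J)"
  by (auto simp: fv.subspace_def ambient_def)

lemma hyp_subspace: "fv.subspace (hyp J c)"
  by (auto simp: fv.subspace_def hyp_def ambient_def sum.distrib algebra_simps simp flip: sum_distrib_left)

lemma finite_indep:
  assumes "finite J" "B \<subseteq> ambient J" "fv.independent B"
  shows "finite B"
  using fv.independent_span_bound[of "delta ` J" B] assms ambient_span[OF assms(1)] by auto


lemma dim_hyp:
  assumes J: "finite J" and X: "fv.subspace X" "X \<subseteq> ambient J"
    and x0: "x0 \<in> X" "x0 \<notin> hyp J c"
  shows "fv.dim X = fv.dim (X \<inter> hyp J c) + 1"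
proof -
  let ?Y = "X \<inter> hyp J c"
  define f where "f x = (\<Sum>j\<in>J. c j * x j)" for x :: "'a \<Rightarrow> real"
  have Ysub: "fv.subspace ?Y" using X hyp_subspace fv.subspace_inter by blast
  have fx0: "f x0 \<noteq> 0" using x0 X by (auto simp: hyp_def f_def)
  obtain B where B: "B \<subseteq> ?Y" "fv.independent B" "?Y \<subseteq> fv.span B" "card B = fv.dim ?Y"
    using fv.basis_exists by blast
  have finB: "finite B" using finite_indep[OF J _ B(2)] B(1) X by auto
  have spanB: "fv.span B \<subseteq> ?Y" using B(1) Ysub fv.span_minimal by blast
  have x0B: "x0 \<notin> fv.span B" using spanB x0 by auto
  have "fv.dim X = card (insert x0 B)"
  proof (rule fv.dim_unique[OF _ _ _ refl])
    show "insert x0 B \<subseteq> X" using B(1) x0 by auto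
    show "fv.independent (insert x0 B)" using fv.independent_insertI[OF x0B B(2)] .
    show "X \<subseteq> fv.span (insert x0 B)"
    proof
      fix x assume x: "x \<in> X"
      define k where "k = f x / f x0"
      have "x - (\<lambda>j. k * x0 j) \<in> X"
        using fv.subspace_diff[OF X(1) x fv.subspace_scale[OF X(1) x0(1)]] .
      then have "(\<lambda>j. x j - k * x0 j) \<in> X" by (simp add: fun_diff_def)
      moreover have "(\<lambda>j. x j - k * x0 j) \<in> ambient J" 
      proof -
        have "x \<in> ambient J" "x0 \<in> ambient J" using X(2) x x0(1) by auto
        then show ?thesis by (auto simp: ambient_def)
      qed
      moreover have "(\<Sum>j\<in>J. c j * (x j - k * x0 j)) = 0"
      proof -
        have "(\<Sum>j\<in>J. c j * (x j - k * x0 j)) = f x - k * f x0"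
          by (simp add: f_def right_diff_distrib sum_subtractf sum_distrib_left mult.left_commute)
        then show ?thesis using fx0 by (simp add: k_def)
      qed
      ultimately have "(\<lambda>j. x j - k * x0 j) \<in> fv.span B" using B(3) by (auto simp: hyp_def)
      then show "x \<in> fv.span (insert x0 B)"
        unfolding fv.span_breakdown_eq by (auto simp: fun_diff_def)
    qed
  qed
  moreover have "x0 \<notin> B" using x0B fv.span_base by blast
  ultimately show ?thesis using finB B(4) by simp
qed

lemma delta_indep: "fv.independent (delta ` J)"
  unfolding fv.independent_explicit_finite_subsets
proof (intro allI impI ballI)
  fix S u v assume S: "S \<subseteq> delta ` J" "finite S" and eq: "(\<Sum>v\<in>S. (\<lambda>j. u v * v j)) = 0" and v: "v \<in> S"
  then obtain i where i: "v = delta i" by auto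
  have "(\<Sum>w\<in>S. (\<lambda>j. u w * w j)) i = u v"
  proof -
    have "(\<Sum>w\<in>S. (\<lambda>j. u w * w j)) i = (\<Sum>w\<in>S. u w * w i)" by (rule sum_fun_apply')
    also have "\<dots> = (\<Sum>w\<in>{v}. u w * w i)"
    proof (rule sum.mono_neutral_right)
      show "\<forall>w\<in>S - {v}. u w * w i = 0"
      proof
        fix w assume w: "w \<in> S - {v}"
        then obtain i' where "w = delta i'" using S by auto
        with w i have "i' \<noteq> i" by auto
        then show "u w * w i = 0" using \<open>w = delta i'\<close> by (simp add: delta_def)
      qed
    qed (use S v in auto)
    finally show ?thesis using i by (simp add: delta_def)
  qed
  then show "u v = 0" using eq by simp
qed

lemma dim_ambient:
  assumes "finite J" shows "fv.dim (ambient J) = card J"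
proof -
  have "fv.dim (ambient J) = card (delta ` J)"
    by (rule fv.dim_unique[OF _ ambient_span[OF assms] delta_indep refl]) (auto simp: ambient_def delta_def)
  also have "\<dots> = card J"
    by (rule card_image) (auto simp: inj_on_def delta_def fun_eq_iff split: if_splits)
  finally show ?thesis .
qed


lemma wf_R:
  assumes "finite (P :: 'a set set)"
  shows "wf {(z,y). z\<in>P \<and> y\<in>P \<and> y \<subset> z}"
proof (rule wf_subset[OF wf_inv_image[OF wf_finite_psubset, of "\<lambda>z. {W\<in>P. z \<subset> W}"]])
  show "{(z,y). z\<in>P \<and> y\<in>P \<and> y \<subset> z} \<subseteq> inv_image finite_psubset (\<lambda>z. {W\<in>P. z \<subset> W})"
    using assms by (auto simp: finite_psubset_def inv_image_def)
qed

lemma mobius_eq: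
  fixes P :: "'a set set"
  assumes fin: "finite P"
  shows "mobius (\<lambda>X Y. Y \<subseteq> X) P x y = (if x\<in>P \<and> y\<in>P \<and> y \<subseteq> x then (if x = y then 1
     else - (\<Sum>z\<in>{z\<in>P. z \<subseteq> x \<and> y \<subseteq> z \<and> z \<noteq> y}. mobius (\<lambda>X Y. Y \<subseteq> X) P x z)) else 0)"
proof -
  define R where "R = {(z,y). z\<in>P \<and> y\<in>P \<and> y \<subset> z}"
  have wfR: "wf R" unfolding R_def by (rule wf_R[OF fin])
  define G where "G x g y = (if x\<in>P \<and> y\<in>P \<and> y \<subseteq> x then (if x = y then 1
     else - (\<Sum>z\<in>{z\<in>P. z \<subseteq> x \<and> y \<subseteq> z \<and> z \<noteq> y}. g z)) else (0::int))" for x g y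
  define Q where "Q mu \<longleftrightarrow> (\<forall>x y. mu x y = G x (mu x) y)" for mu
  define mu0 where "mu0 x = wfrec R (G x)" for x
  have Q0: "Q mu0"
    unfolding Q_def
  proof (intro allI)
    fix x y
    have "mu0 x y = G x (cut (mu0 x) R y) y" unfolding mu0_def by (rule wfrec[OF wfR])
    also have "\<dots> = G x (mu0 x) y"
    proof -
      have "cut (mu0 x) R y z = mu0 x z" if "z \<in> {z\<in>P. z \<subseteq> x \<and> y \<subseteq> z \<and> z \<noteq> y}" "y \<in> P" for z
      proof -
        have "(z, y) \<in> R" using that unfolding R_def by blast
        then show ?thesis by (simp add: cut_apply)
      qed
      then show ?thesis unfolding G_def by (intro if_cong refl arg_cong[where f=uminus] sum.cong) auto
    qed
    finally show "mu0 x y = G x (mu0 x) y" .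
  qed
  have uniq: "mu = mu0" if "Q mu" for mu
  proof (intro ext)
    fix x y
    show "mu x y = mu0 x y"
    proof (induction y rule: wf_induct[OF wfR])
      case (1 y)
      have "mu x y = G x (mu x) y" using \<open>Q mu\<close> by (simp add: Q_def)
      also have "\<dots> = G x (mu0 x) y"
      proof -
        have "mu x z = mu0 x z" if "z \<in> {z\<in>P. z \<subseteq> x \<and> y \<subseteq> z \<and> z \<noteq> y}" "y \<in> P" for z
        proof -
          have "(z, y) \<in> R" using that unfolding R_def by blast
          then show ?thesis using 1 by blast
        qed
        then show ?thesis unfolding G_def by (intro if_cong refl arg_cong[where f=uminus] sum.cong) auto
      qed
      also have "\<dots> = mu0 x y" using Q0 by (simp add: Q_def)
      finally show ?case .
    qed
  qed
  have "mobius (\<lambda>X Y. Y \<subseteq> X) P = (THE mu. Q mu)"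
    unfolding mobius_def Q_def G_def by (rule arg_cong[where f=The]) (simp add: fun_eq_iff)
  also have "\<dots> = mu0" using Q0 uniq by (rule the_equality)
  finally have mm: "mobius (\<lambda>X Y. Y \<subseteq> X) P = mu0" .
  have "mu0 x y = G x (mu0 x) y" using Q0 unfolding Q_def by blast
  then show ?thesis unfolding mm G_def .
qed


lemma sum_Pow_insert:
  assumes "finite A" "a \<notin> A"
  shows "(\<Sum>S\<in>Pow (insert a A). h S) = (\<Sum>S\<in>Pow A. h S) + (\<Sum>S\<in>Pow A. h (insert a S))"
proof -
  have "(\<Sum>S\<in>Pow (insert a A). h S) = (\<Sum>S\<in>Pow A. h S) + (\<Sum>S\<in>insert a ` Pow A. h S)"
    unfolding Pow_insert using assms by (intro sum.union_disjoint) auto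
  also have "(\<Sum>S\<in>insert a ` Pow A. h S) = (\<Sum>S\<in>Pow A. h (insert a S))"
  proof (rule sum.reindex[unfolded comp_def])
    show "inj_on (insert a) (Pow A)" using assms by (auto simp: inj_on_def)
  qed
  finally show ?thesis .
qed

lemma alt_zero:
  assumes "finite A" "A \<noteq> {}"
  shows "(\<Sum>S\<in>Pow A. (-1::int) ^ card S) = 0"
proof -
  obtain a where a: "a \<in> A" using assms by auto
  have A: "A = insert a (A - {a})" using a by auto
  have fin: "finite (A - {a})" using assms by auto
  have "(\<Sum>S\<in>Pow A. (-1::int) ^ card S) = (\<Sum>S\<in>Pow (A - {a}). (-1::int) ^ card S) +
     (\<Sum>S\<in>Pow (A - {a}). (-1::int) ^ card (insert a S))"
    by (subst A, rule sum_Pow_insert[OF fin]) auto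
  also have "(\<Sum>S\<in>Pow (A - {a}). (-1::int) ^ card (insert a S)) = (\<Sum>S\<in>Pow (A - {a}). - ((-1::int) ^ card S))"
  proof (rule sum.cong[OF refl])
    fix S assume "S \<in> Pow (A - {a})"
    then have "finite S" "a \<notin> S" using fin finite_subset by auto
    then show "(-1::int) ^ card (insert a S) = - ((-1) ^ card S)" by simp
  qed
  finally show ?thesis by (simp add: sum_negf)
qed

lemma whitney:
  fixes V :: "('i \<Rightarrow> real) set" and B :: "('i \<Rightarrow> real) set set"
  assumes finB: "finite B" and nV: "\<forall>H\<in>B. \<not> V \<subseteq> H"
  shows "char_poly V B t = (\<Sum>S\<in>Pow B. (-1) ^ card S * t ^ fdim (V \<inter> \<Inter>S))"
proof -
  define h where "h S = V \<inter> \<Inter>S" for S :: "('i \<Rightarrow> real) set set"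
  define L where "L = intersection_poset V B"
  have hL: "L = h ` Pow B" unfolding L_def intersection_poset_def h_def by auto
  have finL: "finite L" using hL finB by simp
  have VL: "V \<in> L" unfolding hL h_def by (rule image_eqI[of _ _ "{}"]) auto
  have LV: "X \<subseteq> V" if "X \<in> L" for X using that unfolding hL h_def by auto
  define g where "g X = (\<Sum>S\<in>{S\<in>Pow B. h S = X}. (-1::int) ^ card S)" for X
  define mu where "mu = mobius (\<lambda>X Y. Y \<subseteq> X) L V"
  define R where "R = {(z,y). z\<in>L \<and> y\<in>L \<and> y \<subset> z}"
  have wfR: "wf R" unfolding R_def by (rule wf_R[OF finL])
  have key: "(\<Sum>z\<in>{z\<in>L. X \<subseteq> z}. g z) = 0" if X: "X \<in> L" "X \<noteq> V" for X
  proof -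
    have "(\<Sum>S\<in>{S\<in>Pow B. X \<subseteq> h S}. (-1::int) ^ card S) =
        (\<Sum>z\<in>h ` {S\<in>Pow B. X \<subseteq> h S}. \<Sum>S\<in>{S'\<in>{S\<in>Pow B. X \<subseteq> h S}. h S' = z}. (-1::int) ^ card S)"
      by (rule sum.image_gen) (use finB in auto)
    also have "h ` {S\<in>Pow B. X \<subseteq> h S} = {z\<in>L. X \<subseteq> z}" unfolding hL by auto
    also have "(\<Sum>z\<in>{z\<in>L. X \<subseteq> z}. \<Sum>S\<in>{S'\<in>{S\<in>Pow B. X \<subseteq> h S}. h S' = z}. (-1::int) ^ card S)
        = (\<Sum>z\<in>{z\<in>L. X \<subseteq> z}. g z)"
      unfolding g_def by (intro sum.cong refl) auto
    finally have 1: "(\<Sum>z\<in>{z\<in>L. X \<subseteq> z}. g z) = (\<Sum>S\<in>{S\<in>Pow B. X \<subseteq> h S}. (-1::int) ^ card S)" ..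
    have 2: "{S\<in>Pow B. X \<subseteq> h S} = Pow {H\<in>B. X \<subseteq> H}" using LV[OF X(1)] unfolding h_def by auto
    obtain S0 where S0: "S0 \<subseteq> B" "X = h S0" using X(1) unfolding hL by auto
    have "S0 \<noteq> {}" using S0 X(2) unfolding h_def by auto
    then obtain H where "H \<in> S0" by auto
    then have "H \<in> {H\<in>B. X \<subseteq> H}" using S0 unfolding h_def by auto
    then have "{H\<in>B. X \<subseteq> H} \<noteq> {}" by auto
    then show ?thesis unfolding 1 2 by (rule alt_zero[rotated]) (use finB in auto)
  qed
  have gV: "g V = 1"
  proof -
    have "{S\<in>Pow B. h S = V} = {{}}"
    proof (auto simp: h_def)
      fix S x assume "S \<subseteq> B" "V \<inter> \<Inter>S = V" "x \<in> S"
      then have "V \<subseteq> x" by blast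
      then show False using nV \<open>S \<subseteq> B\<close> \<open>x \<in> S\<close> by blast
    qed
    then show ?thesis unfolding g_def by simp
  qed
  have mug: "mu X = g X" if "X \<in> L" for X
    using that
  proof (induction X rule: wf_induct[OF wfR])
    case (1 X)
    show ?case
    proof (cases "X = V")
      case True
      then show ?thesis unfolding mu_def using gV VL by (subst mobius_eq[OF finL]) simp
    next
      case False
      let ?Z = "{z\<in>L. z \<subseteq> V \<and> X \<subseteq> z \<and> z \<noteq> X}"
      have "mu X = - (\<Sum>z\<in>?Z. mu z)"
        unfolding mu_def using False VL 1(2) LV[OF 1(2)] by (subst mobius_eq[OF finL]) simp
      also have "\<dots> = - (\<Sum>z\<in>?Z. g z)"
      proof -
        have "mu z = g z" if "z \<in> ?Z" for z
        proof -
          have "(z, X) \<in> R" using that 1(2) unfolding R_def by auto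
          then show ?thesis using 1(1) that by auto
        qed
        then show ?thesis by simp
      qed
      also have "\<dots> = g X"
      proof -
        have e: "{z\<in>L. X \<subseteq> z} = insert X ?Z" using 1(2) LV by auto
        have "g X + (\<Sum>z\<in>?Z. g z) = 0"
          using key[OF 1(2) False] unfolding e using finL by (subst (asm) sum.insert) auto
        then show ?thesis by linarith
      qed
      finally show ?thesis .
    qed
  qed
  have "char_poly V B t = (\<Sum>X\<in>L. of_int (g X) * t ^ fdim X)"
    unfolding char_poly_def L_def[symmetric] mu_def[symmetric] by (intro sum.cong refl) (simp add: mug)
  also have "\<dots> = (\<Sum>X\<in>L. \<Sum>S\<in>{S\<in>Pow B. h S = X}. (-1) ^ card S * t ^ fdim (h S))"
    unfolding g_def by (intro sum.cong refl) (auto simp: of_int_sum sum_distrib_right)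
  also have "\<dots> = (\<Sum>S\<in>Pow B. (-1) ^ card S * t ^ fdim (h S))"
    unfolding hL by (rule sum.image_gen[symmetric]) (use finB in auto)
  finally show ?thesis unfolding h_def .
qed


lemma whitney_pos:
  fixes B :: "('i \<Rightarrow> real) set set" and q :: nat
  assumes J: "finite J" and finB: "finite B" and hB: "\<forall>H\<in>B. \<exists>c. H = hyp J c"
  shows "\<forall>X. fv.subspace X \<longrightarrow> X \<subseteq> ambient J \<longrightarrow>
     (-1) ^ fdim X * (\<Sum>S\<in>Pow B. (-1) ^ card S * (- real q) ^ fdim (X \<inter> \<Inter>S)) \<ge> 0"
  using finB hB
proof (induction B rule: finite_induct)
  case empty
  show ?case
  proof (intro allI impI)
    fix X :: "('i \<Rightarrow> real) set"
    have "(-1::real) ^ fdim X * (- real q) ^ fdim X = real q ^ fdim X"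
      by (simp flip: power_mult_distrib)
    then show "(-1) ^ fdim X * (\<Sum>S\<in>Pow {}. (-1) ^ card S * (- real q) ^ fdim (X \<inter> \<Inter>S)) \<ge> 0"
      by simp
  qed
next
  case (insert H F)
  define W where "W X = (\<Sum>S\<in>Pow F. (-1) ^ card S * (- real q) ^ fdim (X \<inter> \<Inter>S))" for X
  have IH: "\<And>X. fv.subspace X \<Longrightarrow> X \<subseteq> ambient J \<Longrightarrow> (-1) ^ fdim X * W X \<ge> 0"
    using insert.IH insert.prems unfolding W_def by blast
  obtain c where Hc: "H = hyp J c" using insert.prems by auto
  show ?case
  proof (intro allI impI)
    fix X :: "('i \<Rightarrow> real) set"
    assume X: "fv.subspace X" "X \<subseteq> ambient J"
    have "(\<Sum>S\<in>Pow (insert H F). (-1) ^ card S * (- real q) ^ fdim (X \<inter> \<Inter>S)) =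
        W X + (\<Sum>S\<in>Pow F. (-1) ^ card (insert H S) * (- real q) ^ fdim (X \<inter> \<Inter>(insert H S)))"
      unfolding W_def by (rule sum_Pow_insert[OF insert.hyps])
    also have "(\<Sum>S\<in>Pow F. (-1) ^ card (insert H S) * (- real q) ^ fdim (X \<inter> \<Inter>(insert H S))) = - W (X \<inter> H)"
      unfolding W_def sum_negf[symmetric]
    proof (rule sum.cong[OF refl])
      fix S assume "S \<in> Pow F"
      then have "finite S" "H \<notin> S" using insert.hyps finite_subset by auto
      moreover have "X \<inter> \<Inter>(insert H S) = X \<inter> H \<inter> \<Inter>S" by auto
      ultimately show "(-1) ^ card (insert H S) * (- real q) ^ fdim (X \<inter> \<Inter>(insert H S)) =
          - ((-1) ^ card S * (- real q) ^ fdim (X \<inter> H \<inter> \<Inter>S))" by simp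
    qed
    finally have eq: "(\<Sum>S\<in>Pow (insert H F). (-1) ^ card S * (- real q) ^ fdim (X \<inter> \<Inter>S)) = W X - W (X \<inter> H)"
      by simp
    show "(-1) ^ fdim X * (\<Sum>S\<in>Pow (insert H F). (-1) ^ card S * (- real q) ^ fdim (X \<inter> \<Inter>S)) \<ge> 0"
    proof (cases "X \<subseteq> H")
      case True
      then have "X \<inter> H = X" by auto
      then show ?thesis unfolding eq by simp
    next
      case False
      then obtain x0 where x0: "x0 \<in> X" "x0 \<notin> hyp J c" using Hc by auto
      have d: "fdim X = fdim (X \<inter> H) + 1" unfolding fdim_eq Hc by (rule dim_hyp[OF J X x0])
      have sXH: "fv.subspace (X \<inter> H)" using X(1) hyp_subspace Hc fv.subspace_inter by blast
      have "(-1) ^ fdim X * (W X - W (X \<inter> H)) = (-1) ^ fdim X * W X + (-1) ^ fdim (X \<inter> H) * W (X \<inter> H)"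
        unfolding d by (simp add: algebra_simps)
      also have "\<dots> \<ge> 0" 
      proof -
        have "X \<inter> H \<subseteq> ambient J" using X(2) by auto
        then show ?thesis using IH[OF X] IH[OF sXH] by linarith
      qed
      finally show ?thesis unfolding eq .
    qed
  qed
qed


theorem corollary7p11:
  fixes n p :: nat and a :: "nat \<Rightarrow> nat \<Rightarrow> int" and m :: "nat \<Rightarrow> nat" and q :: nat
  assumes nonzero: "\<forall>s<p. \<exists>i<n. a s i \<noteq> 0"
    and m_dom: "\<forall>i\<ge>n. m i = 0"
  shows "(-1) ^ abs_m n m * P_m n p a m (- real q) \<ge> 0"
proof -
  define J where "J = coords n m"
  define V where "V = ambient J"
  define B where "B = arr_m n p a m"
  have Jeq: "J = Sigma (supp_m n m) (\<lambda>i. {1..m i})" unfolding J_def coords_def by auto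
  have fsupp: "finite (supp_m n m)" unfolding supp_m_def by auto
  have finJ: "finite J" unfolding Jeq using fsupp by auto
  have cardJ: "card J = abs_m n m"
  proof -
    have "card J = (\<Sum>i\<in>supp_m n m. m i)" unfolding Jeq using fsupp by (simp add: card_SigmaI)
    also have "\<dots> = (\<Sum>i<n. m i)"
      by (rule sum.mono_neutral_left) (auto simp: supp_m_def)
    finally show ?thesis unfolding abs_m_def .
  qed
  define Vals where "Vals = {0, 1, -1} \<union> (\<lambda>(s,i). real_of_int (a s i)) ` ({..<p} \<times> {..<n})"
  have fVals: "finite Vals" unfolding Vals_def by auto
  have forms_sub: "diff_forms n m \<union> lift_forms n p a m \<subseteq>
      {c. \<forall>x. (x \<in> J \<longrightarrow> c x \<in> Vals) \<and> (x \<notin> J \<longrightarrow> c x = 0)}"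
  proof
    fix c assume "c \<in> diff_forms n m \<union> lift_forms n p a m"
    then show "c \<in> {c. \<forall>x. (x \<in> J \<longrightarrow> c x \<in> Vals) \<and> (x \<notin> J \<longrightarrow> c x = 0)}"
    proof
      assume "c \<in> diff_forms n m"
      then show ?thesis unfolding diff_forms_def J_def coords_def Vals_def by (auto split: if_splits)
    next
      assume "c \<in> lift_forms n p a m"
      then obtain s k where sk: "s < p" "supp_H n a s \<subseteq> supp_m n m" "\<forall>i\<in>supp_m n m. 1 \<le> k i \<and> k i \<le> m i"
        and c: "c = (\<lambda>j. if fst j \<in> supp_m n m \<and> snd j = k (fst j) then of_int (a s (fst j)) else 0)"
        unfolding lift_forms_def by blast
      show ?thesis
      proof (clarsimp, intro conjI impI)
        fix i r assume "(i, r) \<in> J"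
        then have "i < n" unfolding J_def coords_def supp_m_def by auto
        then show "c (i, r) \<in> Vals" unfolding c Vals_def using sk(1) by auto
      next
        fix i r assume "(i, r) \<notin> J"
        then show "c (i, r) = 0" unfolding c J_def coords_def using sk(3) by auto
      qed
    qed
  qed
  have finB: "finite B"
    unfolding B_def arr_m_def J_def[symmetric]
    by (rule finite_imageI, rule finite_subset[OF forms_sub finite_set_of_finite_funs[OF finJ fVals]])
  have hB: "\<forall>H\<in>B. \<exists>c. H = hyp J c" unfolding B_def arr_m_def J_def by auto
  have nV: "\<forall>H\<in>B. \<not> V \<subseteq> H"
  proof
    fix H assume "H \<in> B"
    then obtain c where c: "c \<in> diff_forms n m \<union> lift_forms n p a m" and H: "H = hyp J c"
      unfolding B_def arr_m_def J_def by auto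
    have "\<exists>j0\<in>J. c j0 \<noteq> 0"
      using c
    proof
      assume "c \<in> diff_forms n m"
      then obtain i r r' where "i \<in> supp_m n m" "1 \<le> r" "r \<le> m i" "r \<noteq> r'"
        and "c = (\<lambda>j. if j = (i, r) then 1 else if j = (i, r') then -1 else 0)"
        unfolding diff_forms_def by blast
      then show ?thesis unfolding J_def coords_def by (intro bexI[of _ "(i, r)"]) auto
    next
      assume "c \<in> lift_forms n p a m"
      then obtain s k where sk: "s < p" "supp_H n a s \<subseteq> supp_m n m" "\<forall>i\<in>supp_m n m. 1 \<le> k i \<and> k i \<le> m i"
        and c: "c = (\<lambda>j. if fst j \<in> supp_m n m \<and> snd j = k (fst j) then of_int (a s (fst j)) else 0)"
        unfolding lift_forms_def by blast
      obtain i where i: "i < n" "a s i \<noteq> 0" using nonzero sk(1) by auto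
      then have "i \<in> supp_m n m" using sk(2) unfolding supp_H_def by auto
      then show ?thesis unfolding J_def coords_def c using sk(3) i by (intro bexI[of _ "(i, k i)"]) auto
    qed
    then obtain j0 where j0: "j0 \<in> J" "c j0 \<noteq> 0" by blast
    have "delta j0 \<in> V" unfolding V_def ambient_def delta_def using j0 by auto
    moreover have "(\<Sum>j\<in>J. c j * delta j0 j) = c j0"
      using j0 finJ by (simp add: delta_def if_distrib cong: if_cong)
    ultimately show "\<not> V \<subseteq> H" unfolding H hyp_def using j0 by auto
  qed
  have W: "char_poly V B (- real q) = (\<Sum>S\<in>Pow B. (-1) ^ card S * (- real q) ^ fdim (V \<inter> \<Inter>S))"
    by (rule whitney[OF finB nV])
  have pos: "(-1) ^ fdim V * char_poly V B (- real q) \<ge> 0"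
    unfolding W using whitney_pos[OF finJ finB hB, of q] ambient_subspace unfolding V_def by blast
  have "fdim V = abs_m n m" unfolding fdim_eq V_def dim_ambient[OF finJ] cardJ ..
  then have pos': "(-1) ^ abs_m n m * char_poly V B (- real q) \<ge> 0" using pos by simp
  have dpos: "(\<Prod>i\<in>supp_m n m. fact (m i)) > (0::real)" by (rule prod_pos) auto
  have gen: "0 \<le> (-1) ^ abs_m n m * (char_poly V B (- real q) / d)" if "d > 0" for d :: real
  proof -
    have "(-1) ^ abs_m n m * (char_poly V B (- real q) / d) = ((-1) ^ abs_m n m * char_poly V B (- real q)) / d"
      by simp
    then show ?thesis using pos' that by simp
  qed
  show ?thesis unfolding P_m_def V_def[symmetric] J_def[symmetric] B_def[symmetric]
    by (rule gen[OF dpos])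
qed

end
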